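(* Let $D_1,\dots,D_n$ be PvMDs, set $D:=D_1\cap\dots\cap D_n$, and assume $D$ is essential with respect to $\{D_1,\dots,D_n\}$. Then $D$ is a PvMD.
   Context: For an integral domain $R$ with quotient field $K$ and nonzero fractional ideal $I$: $(R:I)=\{x\in K:xI\subseteq R\}$, $I^v=(R:(R:I))$, $I^t=\bigcup\{J^v:J\subseteq I \text{ finitely generated}\}$; $I$ is a $t$-ideal if $I=(0)$ or $I=I^t$; a $t$-prime is a prime $t$-ideal (so $(0)$ is a $t$-prime); $t$-maximal ideals are $t$-ideals maximal among proper $t$-ideals. $R$ is a PvMD if $R_{\mathfrak m}$ is a valuation domain for all $t$-maximal $\mathfrak m$. The $D_i$ are subrings of a common field. $D=\bigcap_i D_i$ is said to be essential with respect to $\{D_i\}$ if the family $\{(D_i)_{\mathfrak q}:\mathfrak q\in t\text{-Spec}(D_i), i\}$ is an essential representation of $D$, i.e. each $(D_i)_{\mathfrak q}$ is a valuation domain equal to $D_{\mathfrak p}$ for some prime $\mathfrak p$ of $D$. *)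

theory Defs
  imports Main
begin

text \<open>All rings are subrings of a common field, modelled as subsets of a type of class field.\<close>

definition is_subring :: "'a::field set \<Rightarrow> bool" where
  "is_subring R \<longleftrightarrow> 0 \<in> R \<and> 1 \<in> R \<and>
     (\<forall>x\<in>R. \<forall>y\<in>R. x + y \<in> R \<and> x - y \<in> R \<and> x * y \<in> R)"

definition qf :: "'a::field set \<Rightarrow> 'a set" where
  "qf R = {a / b | a b. a \<in> R \<and> b \<in> R \<and> b \<noteq> 0}"

definition is_ideal :: "'a::field set \<Rightarrow> 'a set \<Rightarrow> bool" where
  "is_ideal R I \<longleftrightarrow> I \<subseteq> R \<and> 0 \<in> I \<and>
     (\<forall>x\<in>I. \<forall>y\<in>I. x + y \<in> I) \<and> (\<forall>r\<in>R. \<forall>x\<in>I. r * x \<in> I)"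

definition is_prime_ideal :: "'a::field set \<Rightarrow> 'a set \<Rightarrow> bool" where
  "is_prime_ideal R P \<longleftrightarrow> is_ideal R P \<and> P \<noteq> R \<and>
     (\<forall>a\<in>R. \<forall>b\<in>R. a * b \<in> P \<longrightarrow> a \<in> P \<or> b \<in> P)"

definition colon :: "'a::field set \<Rightarrow> 'a set \<Rightarrow> 'a set" where
  "colon R I = {x \<in> qf R. \<forall>y\<in>I. x * y \<in> R}"

definition vclose :: "'a::field set \<Rightarrow> 'a set \<Rightarrow> 'a set" where
  "vclose R I = colon R (colon R I)"

definition gen :: "'a::field set \<Rightarrow> 'a set \<Rightarrow> 'a set" where
  "gen R F = {\<Sum>a\<in>F. r a * a | r. \<forall>a\<in>F. r a \<in> R}"

definition tclose :: "'a::field set \<Rightarrow> 'a set \<Rightarrow> 'a set" where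
  "tclose R I = \<Union>{vclose R (gen R F) | F. finite F \<and> F \<noteq> {} \<and> F \<subseteq> I - {0}}"

definition is_t_ideal :: "'a::field set \<Rightarrow> 'a set \<Rightarrow> bool" where
  "is_t_ideal R I \<longleftrightarrow> is_ideal R I \<and> (I = {0} \<or> tclose R I = I)"

definition is_t_prime :: "'a::field set \<Rightarrow> 'a set \<Rightarrow> bool" where
  "is_t_prime R P \<longleftrightarrow> is_prime_ideal R P \<and> is_t_ideal R P"

definition is_t_maximal :: "'a::field set \<Rightarrow> 'a set \<Rightarrow> bool" where
  "is_t_maximal R M \<longleftrightarrow> is_t_ideal R M \<and> M \<noteq> R \<and>
     (\<forall>J. is_t_ideal R J \<and> J \<noteq> R \<and> M \<subseteq> J \<longrightarrow> J = M)"

definition localize :: "'a::field set \<Rightarrow> 'a set \<Rightarrow> 'a set" where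
  "localize R P = {a / b | a b. a \<in> R \<and> b \<in> R \<and> b \<notin> P}"

definition is_valuation_domain :: "'a::field set \<Rightarrow> bool" where
  "is_valuation_domain V \<longleftrightarrow> is_subring V \<and>
     (\<forall>x\<in>qf V. x \<noteq> 0 \<longrightarrow> x \<in> V \<or> inverse x \<in> V)"

definition is_PvMD :: "'a::field set \<Rightarrow> bool" where
  "is_PvMD R \<longleftrightarrow> is_subring R \<and>
     (\<forall>M. is_t_maximal R M \<longrightarrow> is_valuation_domain (localize R M))"

definition essential_wrt :: "'a::field set \<Rightarrow> 'i set \<Rightarrow> ('i \<Rightarrow> 'a set) \<Rightarrow> bool" where
  "essential_wrt D I Ds \<longleftrightarrow>
     (\<forall>i\<in>I. \<forall>q. is_t_prime (Ds i) q \<longrightarrow>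
        is_valuation_domain (localize (Ds i) q) \<and>
        (\<exists>p. is_prime_ideal D p \<and> localize (Ds i) q = localize D p))"

end

theory Submission imports Defs begin

lemma sr:
  assumes "is_subring R"
  shows "0 \<in> R" "1 \<in> R" "x \<in> R \<Longrightarrow> y \<in> R \<Longrightarrow> x + y \<in> R"
    "x \<in> R \<Longrightarrow> y \<in> R \<Longrightarrow> x - y \<in> R" "x \<in> R \<Longrightarrow> y \<in> R \<Longrightarrow> x * y \<in> R"
  using assms unfolding is_subring_def by auto

lemma sum_closed_gen:
  assumes "0 \<in> S" "\<forall>x\<in>S. \<forall>y\<in>S. x + y \<in> S" "\<forall>x\<in>F. f x \<in> S"
  shows "sum f F \<in> S"
  using assms(3)
proof (induction F rule: infinite_finite_induct)
  case (insert x F)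
  then show ?case using assms(2) by simp
qed (use assms in auto)

lemma qf_sub: "is_subring R \<Longrightarrow> R \<subseteq> qf R"
  unfolding qf_def by (force dest: sr(2))

lemma qf_zero: "is_subring R \<Longrightarrow> (0::'a::field) \<in> qf R"
  using qf_sub sr(1) by blast

lemma qf_one: "is_subring R \<Longrightarrow> (1::'a::field) \<in> qf R"
  using qf_sub sr(2) by blast

lemma qf_mult: assumes "is_subring R" "x \<in> qf R" "y \<in> qf R" shows "x * y \<in> qf R"
proof -
  obtain a b where 1: "x = a / b" "a \<in> R" "b \<in> R" "b \<noteq> 0" using assms(2) unfolding qf_def by blast
  obtain c d where 2: "y = c / d" "c \<in> R" "d \<in> R" "d \<noteq> 0" using assms(3) unfolding qf_def by blast
  have "x * y = (a*c)/(b*d)" using 1 2 by simp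
  moreover have "a*c \<in> R" "b*d \<in> R" "b * d \<noteq> 0" using 1 2 sr[OF assms(1)] by auto
  ultimately show ?thesis unfolding qf_def by blast
qed

lemma qf_add: assumes "is_subring R" "x \<in> qf R" "y \<in> qf R" shows "x + y \<in> qf R"
proof -
  obtain a b where 1: "x = a / b" "a \<in> R" "b \<in> R" "b \<noteq> 0" using assms(2) unfolding qf_def by blast
  obtain c d where 2: "y = c / d" "c \<in> R" "d \<in> R" "d \<noteq> 0" using assms(3) unfolding qf_def by blast
  have "x + y = (a*d+c*b)/(b*d)" using 1 2 by (simp add: field_simps)
  moreover have "a*d+c*b \<in> R" "b*d \<in> R" "b * d \<noteq> 0" using 1 2 sr[OF assms(1)] by auto
  ultimately show ?thesis unfolding qf_def by blast
qed

lemma qf_div: assumes "is_subring R" "x \<in> qf R" "y \<in> qf R" shows "x / y \<in> qf R"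
proof (cases "y = 0")
  case True then show ?thesis using qf_zero[OF assms(1)] by simp
next
  case False
  obtain a b where 1: "x = a / b" "a \<in> R" "b \<in> R" "b \<noteq> 0" using assms(2) unfolding qf_def by blast
  obtain c d where 2: "y = c / d" "c \<in> R" "d \<in> R" "d \<noteq> 0" using assms(3) unfolding qf_def by blast
  have "c \<noteq> 0" using 2 False by auto
  have "a / b / (c / d) = (a*d)/(b*c)" using 1 2 \<open>c \<noteq> 0\<close> by (simp add: field_simps)
  then have "x / y = (a*d)/(b*c)" using 1 2 by simp
  moreover have "a*d \<in> R" "b*c \<in> R" "b * c \<noteq> 0" using 1 2 \<open>c \<noteq> 0\<close> sr[OF assms(1)] by auto
  ultimately show ?thesis unfolding qf_def by blast
qed

lemma colon_anti: "I \<subseteq> J \<Longrightarrow> colon R J \<subseteq> colon R I"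
  unfolding colon_def by auto

lemma v_mono: "I \<subseteq> J \<Longrightarrow> vclose R I \<subseteq> vclose R J"
  unfolding vclose_def by (intro colon_anti)

lemma sub_v: "I \<subseteq> qf R \<Longrightarrow> I \<subseteq> vclose R I"
  unfolding vclose_def colon_def by (auto simp: mult.commute)

lemma v_idem: assumes "I \<subseteq> qf R" shows "vclose R (vclose R I) = vclose R I"
proof -
  have "colon R (vclose R I) \<subseteq> colon R I" using colon_anti sub_v[OF assms] by blast
  moreover have "colon R I \<subseteq> colon R (vclose R I)"
    using sub_v[of "colon R I" R] unfolding vclose_def colon_def by auto
  ultimately have "colon R (vclose R I) = colon R I" by blast
  then show ?thesis unfolding vclose_def[of R "vclose R I"] by (simp add: vclose_def)
qed

lemma v_sub_R: assumes "is_subring R" "I \<subseteq> R" shows "vclose R I \<subseteq> R"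
proof
  fix y assume y: "y \<in> vclose R I"
  have "1 \<in> colon R I" unfolding colon_def using qf_one[OF assms(1)] assms(2) by auto
  then show "y \<in> R" using y unfolding vclose_def colon_def by force
qed

lemma v_zero: "is_subring R \<Longrightarrow> 0 \<in> vclose R I"
  unfolding vclose_def colon_def using qf_zero sr(1) by auto

lemma v_add: assumes "is_subring R" "x \<in> vclose R I" "y \<in> vclose R I" shows "x + y \<in> vclose R I"
  using assms qf_add[OF assms(1)] sr(3)[OF assms(1)] unfolding vclose_def colon_def
  by (auto simp: distrib_right)

lemma v_mult: assumes "is_subring R" "r \<in> R" "x \<in> vclose R I" shows "r * x \<in> vclose R I"
  using assms qf_mult[OF assms(1)] qf_sub[OF assms(1)] sr(5)[OF assms(1)] unfolding vclose_def colon_def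
  by (auto simp: mult.assoc)

lemma v_scale:
  assumes "is_subring R" "b \<in> R" "\<forall>x\<in>I. b * x \<in> J" "y \<in> vclose R I"
  shows "b * y \<in> vclose R J"
proof -
  have bq: "b \<in> qf R" using qf_sub[OF assms(1)] assms(2) by blast
  have yq: "y \<in> qf R" using assms(4) unfolding vclose_def colon_def by blast
  have "\<forall>z\<in>colon R J. b * y * z \<in> R"
  proof
    fix z assume z: "z \<in> colon R J"
    have "z * b \<in> colon R I" using z assms(3) qf_mult[OF assms(1) _ bq]
      unfolding colon_def by (auto simp: mult.assoc)
    then have "y * (z * b) \<in> R" using assms(4) unfolding vclose_def colon_def by blast
    then show "b * y * z \<in> R" by (simp add: ac_simps)
  qed
  then show ?thesis using qf_mult[OF assms(1) bq yq] unfolding vclose_def colon_def[of R "colon R J"] by blast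
qed

lemma gen_submodule:
  assumes "is_subring R"
  shows "0 \<in> gen R F" "x \<in> gen R F \<Longrightarrow> y \<in> gen R F \<Longrightarrow> x + y \<in> gen R F"
    "c \<in> R \<Longrightarrow> x \<in> gen R F \<Longrightarrow> c * x \<in> gen R F"
proof -
  show "0 \<in> gen R F" unfolding gen_def
    by (rule CollectI, rule exI[of _ "\<lambda>_. 0"]) (simp add: sr[OF assms])
next
  assume "x \<in> gen R F" "y \<in> gen R F"
  then obtain r s where "x = (\<Sum>a\<in>F. r a * a)" "\<forall>a\<in>F. r a \<in> R" "y = (\<Sum>a\<in>F. s a * a)" "\<forall>a\<in>F. s a \<in> R"
    unfolding gen_def by blast
  then show "x + y \<in> gen R F" unfolding gen_def
    by (intro CollectI exI[of _ "\<lambda>a. r a + s a"]) (auto simp: sum.distrib distrib_right sr[OF assms])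
next
  assume "c \<in> R" "x \<in> gen R F"
  then obtain r where "x = (\<Sum>a\<in>F. r a * a)" "\<forall>a\<in>F. r a \<in> R"
    unfolding gen_def by blast
  then show "c * x \<in> gen R F" unfolding gen_def using \<open>c \<in> R\<close>
    by (intro CollectI exI[of _ "\<lambda>a. c * r a"]) (auto simp: sum_distrib_left mult.assoc sr[OF assms])
qed

lemma gen_sub:
  assumes "0 \<in> S" "\<forall>x\<in>S. \<forall>y\<in>S. x + y \<in> S" "\<forall>c\<in>R. \<forall>x\<in>S. c * x \<in> S" "F \<subseteq> S"
  shows "gen R F \<subseteq> S"
proof
  fix x assume "x \<in> gen R F"
  then obtain r where "x = (\<Sum>a\<in>F. r a * a)" "\<forall>a\<in>F. r a \<in> R" unfolding gen_def by blast
  then show "x \<in> S" using assms by (auto intro!: sum_closed_gen)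
qed

lemma mem_gen: assumes "is_subring R" "finite F" "a \<in> F" shows "a \<in> gen R F"
proof -
  have "(\<Sum>x\<in>F. (if x = a then 1 else 0) * x) = a"
  proof -
    have "(\<Sum>x\<in>F. (if x = a then 1 else 0) * x) = (\<Sum>x\<in>F. if x = a then x else 0)"
      by (rule sum.cong) auto
    then show ?thesis using assms(2,3) by simp
  qed
  then show ?thesis unfolding gen_def using sr[OF assms(1)]
    by (intro CollectI exI[of _ "\<lambda>x. if x = a then 1 else 0"]) auto
qed

lemma gen_sub_R: "is_subring R \<Longrightarrow> F \<subseteq> R \<Longrightarrow> gen R F \<subseteq> R"
  by (rule gen_sub) (auto simp: sr)

lemma gen_mono: assumes "is_subring R" "finite G" "F \<subseteq> G" shows "gen R F \<subseteq> gen R G"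
  using gen_submodule[OF assms(1)] mem_gen[OF assms(1,2)] assms(3)
  by (intro gen_sub) auto

lemma gen_scale:
  assumes "is_subring R" "finite F" "x \<in> gen R F"
  shows "b * x \<in> gen R ((*) b ` F)"
proof -
  let ?S = "{y. b * y \<in> gen R ((*) b ` F)}"
  have fi: "finite ((*) b ` F)" using assms(2) by simp
  have "\<forall>x\<in>F. b * x \<in> gen R ((*) b ` F)" using mem_gen[OF assms(1) fi] by blast
  then have "gen R F \<subseteq> ?S"
    using gen_submodule[OF assms(1), where F="(*) b ` F"]
    by (intro gen_sub) (auto simp: distrib_left mult.left_commute)
  then show ?thesis using assms(3) by blast
qed


lemma t_zero: assumes "is_subring R" "x \<in> X" "x \<noteq> 0" shows "0 \<in> tclose R X"
  unfolding tclose_def using v_zero[OF assms(1)] assms(2,3)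
  by (intro UnionI[of "vclose R (gen R {x})"]) auto

lemma sub_t: assumes "is_subring R" "X \<subseteq> R" "x0 \<in> X" "x0 \<noteq> 0" shows "X \<subseteq> tclose R X"
proof
  fix x assume x: "x \<in> X"
  show "x \<in> tclose R X"
  proof (cases "x = 0")
    case True then show ?thesis using t_zero[OF assms(1,3,4)] by simp
  next
    case False
    have "gen R {x} \<subseteq> qf R" using gen_sub_R[OF assms(1)] qf_sub[OF assms(1)] x assms(2) by blast
    then have "x \<in> vclose R (gen R {x})" using mem_gen[OF assms(1), of "{x}" x] sub_v by blast
    then show ?thesis unfolding tclose_def using x False by blast
  qed
qed

lemma t_sub_R: assumes "is_subring R" "X \<subseteq> R" shows "tclose R X \<subseteq> R"
  unfolding tclose_def using v_sub_R[OF assms(1) gen_sub_R[OF assms(1)]] assms(2) by blast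

lemma v_gen_qf: "is_subring R \<Longrightarrow> F \<subseteq> R \<Longrightarrow> gen R F \<subseteq> qf R"
  using gen_sub_R qf_sub by blast

lemma t_ideal:
  assumes R: "is_subring R" and S: "S \<subseteq> R" "s0 \<in> S" "s0 \<noteq> 0"
  shows "is_t_ideal R (tclose R S)" "S \<subseteq> tclose R S"
proof -
  show SS: "S \<subseteq> tclose R S" by (rule sub_t[OF R S])
  have TR: "tclose R S \<subseteq> R" by (rule t_sub_R[OF R S(1)])
  have vm: "vclose R (gen R F) \<subseteq> vclose R (gen R G)" if "finite G" "F \<subseteq> G" for F G
    by (rule v_mono[OF gen_mono[OF R that]])
  have ideal: "is_ideal R (tclose R S)"
    unfolding is_ideal_def
  proof (intro conjI ballI)
    show "tclose R S \<subseteq> R" by (rule TR)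
    show "0 \<in> tclose R S" using t_zero[OF R S(2,3)] .
  next
    fix x y assume "x \<in> tclose R S" "y \<in> tclose R S"
    then obtain F G where F: "finite F" "F \<noteq> {}" "F \<subseteq> S - {0}" "x \<in> vclose R (gen R F)"
      and G: "finite G" "G \<noteq> {}" "G \<subseteq> S - {0}" "y \<in> vclose R (gen R G)"
      unfolding tclose_def by blast
    have "x \<in> vclose R (gen R (F \<union> G))" "y \<in> vclose R (gen R (F \<union> G))"
      using vm[of "F \<union> G" F] vm[of "F \<union> G" G] F G by auto
    then have "x + y \<in> vclose R (gen R (F \<union> G))" by (rule v_add[OF R])
    then show "x + y \<in> tclose R S" unfolding tclose_def using F G by blast
  next
    fix r x assume "r \<in> R" "x \<in> tclose R S"
    then obtain F where F: "finite F" "F \<noteq> {}" "F \<subseteq> S - {0}" "x \<in> vclose R (gen R F)"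
      unfolding tclose_def by blast
    then have "r * x \<in> vclose R (gen R F)" using v_mult[OF R \<open>r \<in> R\<close>] by blast
    then show "r * x \<in> tclose R S" unfolding tclose_def using F by blast
  qed
  have "tclose R (tclose R S) \<subseteq> tclose R S"
  proof
    fix x assume "x \<in> tclose R (tclose R S)"
    then obtain G where G: "finite G" "G \<noteq> {}" "G \<subseteq> tclose R S - {0}" "x \<in> vclose R (gen R G)"
      unfolding tclose_def by blast
    have "\<forall>g\<in>G. \<exists>F. finite F \<and> F \<noteq> {} \<and> F \<subseteq> S - {0} \<and> g \<in> vclose R (gen R F)"
      using G(3) unfolding tclose_def by blast
    then obtain f where f: "\<forall>g\<in>G. finite (f g) \<and> f g \<noteq> {} \<and> f g \<subseteq> S - {0} \<and> g \<in> vclose R (gen R (f g))"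
      by metis
    define F where "F = \<Union>(f ` G)"
    have Ff: "finite F" using f G(1) unfolding F_def by auto
    have Fne: "F \<noteq> {}" using f G(2) unfolding F_def by auto
    have FS: "F \<subseteq> S - {0}" using f unfolding F_def by auto
    have "G \<subseteq> vclose R (gen R F)"
    proof
      fix g assume "g \<in> G"
      then have "f g \<subseteq> F" "g \<in> vclose R (gen R (f g))" using f unfolding F_def by auto
      then show "g \<in> vclose R (gen R F)" using vm[OF Ff] by blast
    qed
    then have "gen R G \<subseteq> vclose R (gen R F)"
      using v_zero[OF R] v_add[OF R] v_mult[OF R] by (intro gen_sub) auto
    then have "vclose R (gen R G) \<subseteq> vclose R (gen R F)"
      using v_mono v_idem[OF v_gen_qf[OF R], of F] FS S(1) by blast
    then show "x \<in> tclose R S" using G(4) Ff Fne FS unfolding tclose_def by blast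
  qed
  moreover have "tclose R S \<subseteq> tclose R (tclose R S)"
    using sub_t[OF R TR, of s0] SS S by blast
  ultimately show "is_t_ideal R (tclose R S)" unfolding is_t_ideal_def using ideal by blast
qed

lemma t_ideal_closed: "is_t_ideal R J \<Longrightarrow> x \<in> J \<Longrightarrow> x \<noteq> 0 \<Longrightarrow> tclose R J = J"
  unfolding is_t_ideal_def by auto

lemma ideal_one: "is_ideal R J \<Longrightarrow> 1 \<in> J \<Longrightarrow> J = R"
  unfolding is_ideal_def by (metis mult.right_neutral subsetI subset_antisym)

lemma max_prime:
  assumes R: "is_subring R" and Q: "is_t_ideal R Q" "1 \<notin> Q" "q0 \<in> Q" "q0 \<noteq> 0"
    and mx: "\<forall>J. is_t_ideal R J \<and> Q \<subseteq> J \<and> 1 \<notin> J \<longrightarrow> J = Q"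
  shows "is_prime_ideal R Q"
proof -
  have QI: "is_ideal R Q" using Q(1) unfolding is_t_ideal_def by blast
  have QR: "Q \<subseteq> R" "0 \<in> Q" using QI unfolding is_ideal_def by auto
  have Qt: "tclose R Q = Q" using t_ideal_closed[OF Q(1,3,4)] .
  have "Q \<noteq> R" using Q(2) sr(2)[OF R] by blast
  moreover have "a \<in> Q \<or> b \<in> Q" if ab: "a \<in> R" "b \<in> R" "a * b \<in> Q" for a b
  proof (rule ccontr)
    assume nab: "\<not> (a \<in> Q \<or> b \<in> Q)"
    then have a0: "a \<noteq> 0" and b0: "b \<noteq> 0" using QR by auto
    define S where "S = {q + a * r | q r. q \<in> Q \<and> r \<in> R}"
    have SR: "S \<subseteq> R" unfolding S_def using QR ab sr[OF R] by auto
    have "a = 0 + a * 1" by simp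
    then have aS: "a \<in> S" unfolding S_def using QR sr(2)[OF R] by blast
    have QS: "Q \<subseteq> S"
    proof
      fix q assume "q \<in> Q"
      moreover have "q = q + a * 0" by simp
      ultimately show "q \<in> S" unfolding S_def using sr(1)[OF R] by blast
    qed
    note T = t_ideal[OF R SR aS a0]
    have "1 \<in> tclose R S"
    proof (rule ccontr)
      assume "1 \<notin> tclose R S"
      then have "tclose R S = Q" using mx T QS by blast
      then show False using aS T(2) nab by blast
    qed
    then obtain F where F: "finite F" "F \<noteq> {}" "F \<subseteq> S - {0}" "1 \<in> vclose R (gen R F)"
      unfolding tclose_def by blast
    have "\<forall>x\<in>gen R F. b * x \<in> gen R ((*) b ` F)" using gen_scale[OF R F(1)] by blast
    then have "b * 1 \<in> vclose R (gen R ((*) b ` F))" using v_scale[OF R ab(2) _ F(4)] by blast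
    moreover have "(*) b ` F \<subseteq> Q - {0}"
    proof
      fix y assume "y \<in> (*) b ` F"
      then obtain x where x: "x \<in> F" "y = b * x" by blast
      then obtain q r where qr: "x = q + a * r" "q \<in> Q" "r \<in> R" "x \<noteq> 0" using F(3) unfolding S_def by blast
      have "b * x = b * q + (a * b) * r" using qr by (simp add: algebra_simps)
      moreover have "b * q \<in> Q" "r * (a * b) \<in> Q" using QI qr ab unfolding is_ideal_def by auto
      ultimately have "b * x \<in> Q" using QI unfolding is_ideal_def by (simp add: mult.commute)
      then show "y \<in> Q - {0}" using x qr b0 by simp
    qed
    moreover have "finite ((*) b ` F)" "(*) b ` F \<noteq> {}" using F(1,2) by auto
    ultimately have "b \<in> tclose R Q" unfolding tclose_def by auto
    then show False using Qt nab by simp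
  qed
  ultimately show ?thesis unfolding is_prime_ideal_def using QI QR(1) by blast
qed


lemma exists_t_prime:
  assumes R: "is_subring R" and M: "M \<subseteq> R" "m0 \<in> M" "m0 \<noteq> 0" "1 \<notin> tclose R M"
  shows "\<exists>Q. is_t_prime R Q \<and> M \<subseteq> Q"
proof -
  define A where "A = {J. is_t_ideal R J \<and> M \<subseteq> J \<and> 1 \<notin> J}"
  note T = t_ideal[OF R M(1-3)]
  have "tclose R M \<in> A" unfolding A_def using T M(4) by blast
  then have Ane: "A \<noteq> {}" by blast
  have "\<Union>C \<in> A" if C: "C \<noteq> {}" "subset.chain A C" for C
  proof -
    have CA: "C \<subseteq> A" and ch: "\<forall>X\<in>C. \<forall>Y\<in>C. X \<subseteq> Y \<or> Y \<subseteq> X" using C(2) unfolding subset_chain_def by auto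
    have idJ: "is_ideal R J" if "J \<in> C" for J using CA that unfolding A_def is_t_ideal_def by blast
    have MU: "M \<subseteq> \<Union>C" using C(1) CA unfolding A_def by blast
    have UR: "\<Union>C \<subseteq> R" using idJ unfolding is_ideal_def by blast
    have "is_ideal R (\<Union>C)" unfolding is_ideal_def
    proof (intro conjI ballI)
      show "\<Union>C \<subseteq> R" by (rule UR)
      show "0 \<in> \<Union>C" using C(1) idJ unfolding is_ideal_def by blast
    next
      fix x y assume "x \<in> \<Union>C" "y \<in> \<Union>C"
      then obtain J1 J2 where "J1 \<in> C" "J2 \<in> C" "x \<in> J1" "y \<in> J2" by blast
      then have "\<exists>J\<in>C. x \<in> J \<and> y \<in> J" using ch by blast
      then show "x + y \<in> \<Union>C" using idJ unfolding is_ideal_def by blast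
    next
      fix r x assume "r \<in> R" "x \<in> \<Union>C"
      then show "r * x \<in> \<Union>C" using idJ unfolding is_ideal_def by blast
    qed
    moreover have "tclose R (\<Union>C) \<subseteq> \<Union>C"
    proof
      fix x assume "x \<in> tclose R (\<Union>C)"
      then obtain G where G: "finite G" "G \<noteq> {}" "G \<subseteq> \<Union>C - {0}" "x \<in> vclose R (gen R G)"
        unfolding tclose_def by blast
      obtain J where J: "J \<in> C" "G \<subseteq> J" using finite_subset_Union_chain[OF G(1) _ C] G(3) by blast
      obtain g where g: "g \<in> G" using G(2) by blast
      have "tclose R J = J" using t_ideal_closed[of R J g] CA J g G(3) unfolding A_def by blast
      moreover have "x \<in> tclose R J" unfolding tclose_def using G J by blast
      ultimately show "x \<in> \<Union>C" using J by blast
    qed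
    moreover have "\<Union>C \<subseteq> tclose R (\<Union>C)" using sub_t[OF R UR, of m0] MU M by blast
    moreover have "1 \<notin> \<Union>C" using CA unfolding A_def by blast
    ultimately show ?thesis unfolding A_def is_t_ideal_def using MU by blast
  qed
  then obtain Q where Q: "Q \<in> A" "\<forall>X\<in>A. Q \<subseteq> X \<longrightarrow> X = Q"
    using subset_Zorn_nonempty[OF Ane] by blast
  have "is_prime_ideal R Q"
    using Q M by (intro max_prime[OF R, of Q m0]) (auto simp: A_def)
  then show ?thesis using Q unfolding A_def is_t_prime_def by blast
qed

lemma prime_one: "is_prime_ideal R P \<Longrightarrow> 1 \<notin> P"
  unfolding is_prime_ideal_def using ideal_one by blast

lemma loc_sub: assumes R: "is_subring R" and P: "is_prime_ideal R P"
  shows "is_subring (localize R P)"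
proof -
  have P0: "0 \<in> P" and PR: "P \<subseteq> R" using P unfolding is_prime_ideal_def is_ideal_def by auto
  have P1: "1 \<notin> P" using prime_one[OF P] .
  have mul: "b * d \<notin> P" if "b \<in> R" "d \<in> R" "b \<notin> P" "d \<notin> P" for b d
    using P that unfolding is_prime_ideal_def by blast
  have "(0::'a) = 0 / 1" "(1::'a) = 1 / 1" by simp_all
  then have 01: "0 \<in> localize R P" "1 \<in> localize R P" unfolding localize_def using sr[OF R] P1 by blast+
  have ops: "x + y \<in> localize R P \<and> x - y \<in> localize R P \<and> x * y \<in> localize R P"
    if xy: "x \<in> localize R P" "y \<in> localize R P" for x y
  proof -
    obtain a b where 1: "x = a / b" "a \<in> R" "b \<in> R" "b \<notin> P" using xy(1) unfolding localize_def by blast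
    obtain c d where 2: "y = c / d" "c \<in> R" "d \<in> R" "d \<notin> P" using xy(2) unfolding localize_def by blast
    have b0: "b \<noteq> 0" "d \<noteq> 0" using 1 2 P0 by auto
    have "a / b + c / d = (a*d+c*b)/(b*d)" "a / b - c / d = (a*d-c*b)/(b*d)" "a / b * (c / d) = (a*c)/(b*d)"
      using b0 by (simp_all add: field_simps)
    moreover have "a*d+c*b \<in> R" "a*d-c*b \<in> R" "a*c \<in> R" "b*d \<in> R" using 1 2 sr[OF R] by auto
    moreover have "b*d \<notin> P" using mul 1 2 by blast
    ultimately show ?thesis unfolding localize_def 1(1) 2(1) by blast
  qed
  show ?thesis unfolding is_subring_def using 01 ops by blast
qed

lemma loc_R: assumes "1 \<notin> P" "1 \<in> R" shows "R \<subseteq> localize R P"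
proof
  fix x assume "x \<in> R"
  moreover have "x = x / 1" by simp
  ultimately show "x \<in> localize R P" unfolding localize_def using assms by blast
qed

lemma loc_qf: assumes R: "is_subring R" "0 \<in> P" "1 \<notin> P" shows "localize R P \<subseteq> qf R"
  unfolding localize_def qf_def using assms by force

lemma qf_loc: assumes R: "is_subring R" and P: "is_prime_ideal R P"
  shows "qf (localize R P) = qf R"
proof
  have P0: "0 \<in> P" using P unfolding is_prime_ideal_def is_ideal_def by auto
  have P1: "1 \<notin> P" using prime_one[OF P] .
  show "qf (localize R P) \<subseteq> qf R"
  proof
    fix x assume "x \<in> qf (localize R P)"
    then obtain u v where "x = u / v" "u \<in> localize R P" "v \<in> localize R P" unfolding qf_def by blast
    then show "x \<in> qf R" using qf_div[OF R] loc_qf[OF R P0 P1] by blast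
  qed
  show "qf R \<subseteq> qf (localize R P)" unfolding qf_def using loc_R[OF P1 sr(2)[OF R]] by blast
qed

lemma endgame:
  assumes D: "is_subring D" and Di: "is_subring Di" and DDi: "D \<subseteq> Di"
    and M: "is_prime_ideal D M" and Q: "is_prime_ideal Di Q" and MQ: "M \<subseteq> Q"
    and V: "is_valuation_domain (localize Di Q)" and eq: "localize Di Q = localize D p"
    and p: "is_prime_ideal D p"
  shows "is_valuation_domain (localize D M)"
proof -
  have Q0: "0 \<in> Q" and QI: "is_ideal Di Q" using Q unfolding is_prime_ideal_def is_ideal_def by auto
  have p0: "0 \<in> p" using p unfolding is_prime_ideal_def is_ideal_def by auto
  have MD: "M \<subseteq> D" using M unfolding is_prime_ideal_def is_ideal_def by auto
  have Mp: "M \<subseteq> p"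
  proof
    fix m assume m: "m \<in> M"
    show "m \<in> p"
    proof (rule ccontr)
      assume nm: "m \<notin> p"
      then have m0: "m \<noteq> 0" using p0 by auto
      have "1 / m \<in> localize D p" unfolding localize_def using sr(2)[OF D] MD m nm by blast
      then have "1 / m \<in> localize Di Q" using eq by simp
      then obtain a b where ab: "1 / m = a / b" "a \<in> Di" "b \<in> Di" "b \<notin> Q"
        unfolding localize_def by blast
      have b0: "b \<noteq> 0" using ab Q0 by auto
      have "b = a * m" using ab(1) m0 b0 by (simp add: field_simps)
      moreover have "a * m \<in> Q" using QI ab(2) m MQ unfolding is_ideal_def by blast
      ultimately show False using ab(4) by simp
    qed
  qed
  have sub: "localize D p \<subseteq> localize D M" unfolding localize_def using Mp by blast
  have "\<forall>x\<in>qf (localize D M). x \<noteq> 0 \<longrightarrow> x \<in> localize D M \<or> inverse x \<in> localize D M"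
  proof (intro ballI impI)
    fix x assume "x \<in> qf (localize D M)" "x \<noteq> 0"
    then have "x \<in> qf (localize D p)" using qf_loc[OF D M] qf_loc[OF D p] by simp
    then have "x \<in> localize D p \<or> inverse x \<in> localize D p"
      using V \<open>x \<noteq> 0\<close> unfolding eq is_valuation_domain_def by blast
    then show "x \<in> localize D M \<or> inverse x \<in> localize D M" using sub by blast
  qed
  then show ?thesis unfolding is_valuation_domain_def using loc_sub[OF D M] by blast
qed


lemma qf_mono: "A \<subseteq> B \<Longrightarrow> qf A \<subseteq> qf B"
  unfolding qf_def by blast

lemma zero_prime: assumes R: "is_subring R" shows "is_prime_ideal R {0}" "is_t_prime R {0}"
proof -
  have "is_ideal R {0}" unfolding is_ideal_def using sr(1)[OF R] by auto
  moreover have "{0} \<noteq> R" using sr(2)[OF R] by force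
  ultimately show P: "is_prime_ideal R {0}" unfolding is_prime_ideal_def by auto
  then show "is_t_prime R {0}" unfolding is_t_prime_def is_t_ideal_def is_prime_ideal_def by auto
qed

theorem corollary2p15:
  fixes Ds :: "nat \<Rightarrow> 'a::field set" and n :: nat
  assumes "n \<ge> 1"
    and "\<forall>i<n. is_PvMD (Ds i)"
    and "essential_wrt (\<Inter>i<n. Ds i) {..<n} Ds"
  shows "is_PvMD (\<Inter>i<n. Ds i)"
proof -
  define D where "D = (\<Inter>i<n. Ds i)"
  have Dsr: "is_subring (Ds i)" if "i < n" for i using assms(2) that unfolding is_PvMD_def by blast
  have DDs: "D \<subseteq> Ds i" if "i < n" for i using that unfolding D_def by blast
  have D: "is_subring D" unfolding D_def is_subring_def using Dsr[unfolded is_subring_def] by (simp add: lessThan_iff)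
  have ess: "\<And>i q. i < n \<Longrightarrow> is_t_prime (Ds i) q \<Longrightarrow> is_valuation_domain (localize (Ds i) q) \<and>
        (\<exists>p. is_prime_ideal D p \<and> localize (Ds i) q = localize D p)"
    using assms(3) unfolding essential_wrt_def D_def by blast
  have fin: "\<And>i Q M. i < n \<Longrightarrow> is_t_prime (Ds i) Q \<Longrightarrow> is_prime_ideal D M \<Longrightarrow> M \<subseteq> Q \<Longrightarrow>
      is_valuation_domain (localize D M)"
  proof -
    fix i Q M assume i: "i < n" and Q: "is_t_prime (Ds i) Q" and M: "is_prime_ideal D M" and MQ: "M \<subseteq> Q"
    obtain p where "is_valuation_domain (localize (Ds i) Q)" "is_prime_ideal D p"
      "localize (Ds i) Q = localize D p" using ess[OF i Q] by blast
    then show "is_valuation_domain (localize D M)"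
      using endgame[OF D Dsr[OF i] DDs[OF i] M _ MQ] Q unfolding is_t_prime_def by blast
  qed
  have n0: "0 < n" using assms(1) by simp
  have "is_valuation_domain (localize D M)" if Mt: "is_t_maximal D M" for M
  proof -
    have Mti: "is_t_ideal D M" and MnD: "M \<noteq> D"
      and mx: "\<forall>J. is_t_ideal D J \<and> J \<noteq> D \<and> M \<subseteq> J \<longrightarrow> J = M"
      using Mt unfolding is_t_maximal_def by auto
    have MI: "is_ideal D M" using Mti unfolding is_t_ideal_def by blast
    have MD: "M \<subseteq> D" "0 \<in> M" using MI unfolding is_ideal_def by auto
    have M1: "1 \<notin> M" using ideal_one[OF MI] MnD by blast
    show ?thesis
    proof (cases "M = {0}")
      case True
      then show ?thesis using fin[OF n0 zero_prime(2)[OF Dsr[OF n0]]] zero_prime(1)[OF D] by simp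
    next
      case False
      then obtain m0 where m0: "m0 \<in> M" "m0 \<noteq> 0" using MD by blast
      have Mt': "tclose D M = M" using t_ideal_closed[OF Mti m0] .
      have Mp: "is_prime_ideal D M"
        using mx sr(2)[OF D] by (intro max_prime[OF D Mti M1 m0]) blast
      show ?thesis
      proof (cases "\<forall>i<n. 1 \<in> tclose (Ds i) M")
        case True
        then have "\<forall>i<n. \<exists>F. finite F \<and> F \<noteq> {} \<and> F \<subseteq> M - {0} \<and> 1 \<in> vclose (Ds i) (gen (Ds i) F)"
          unfolding tclose_def by blast
        then obtain f where f: "\<forall>i<n. finite (f i) \<and> f i \<noteq> {} \<and> f i \<subseteq> M - {0} \<and> 1 \<in> vclose (Ds i) (gen (Ds i) (f i))"
          by metis
        define F where "F = \<Union>(f ` {..<n})"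
        have Ff: "finite F" using f unfolding F_def by auto
        have Fne: "F \<noteq> {}" using f n0 unfolding F_def by blast
        have FM: "F \<subseteq> M - {0}" using f unfolding F_def by auto
        have "\<forall>z\<in>colon D (gen D F). 1 * z \<in> D"
        proof
          fix z assume z: "z \<in> colon D (gen D F)"
          have zq: "z \<in> qf D" and zg: "\<forall>g\<in>gen D F. z * g \<in> D" using z unfolding colon_def by auto
          have zF: "z * a \<in> D" if "a \<in> F" for a using zg mem_gen[OF D Ff that] by blast
          have "z \<in> Ds i" if i: "i < n" for i
          proof -
            have "z \<in> colon (Ds i) (gen (Ds i) (f i))" unfolding colon_def
            proof (intro CollectI conjI ballI)
              show "z \<in> qf (Ds i)" using zq qf_mono[OF DDs[OF i]] by blast
            next
              fix g assume "g \<in> gen (Ds i) (f i)"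
              then obtain r where r: "g = (\<Sum>a\<in>f i. r a * a)" "\<forall>a\<in>f i. r a \<in> Ds i"
                unfolding gen_def by blast
              have "z * g = (\<Sum>a\<in>f i. r a * (z * a))" unfolding r(1)
                by (simp add: sum_distrib_left ac_simps)
              moreover have "\<forall>a\<in>f i. r a * (z * a) \<in> Ds i"
              proof
                fix a assume a: "a \<in> f i"
                then have "a \<in> F" using i unfolding F_def by blast
                then have "z * a \<in> Ds i" using zF DDs[OF i] by blast
                then show "r a * (z * a) \<in> Ds i" using r(2) a sr(5)[OF Dsr[OF i]] by blast
              qed
              ultimately show "z * g \<in> Ds i"
                using sum_closed_gen[of "Ds i"] sr(1,3)[OF Dsr[OF i]] by auto
            qed
            then show ?thesis using f i unfolding vclose_def colon_def[of _ "colon _ _"] by force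
          qed
          then show "1 * z \<in> D" unfolding D_def by simp
        qed
        then have "1 \<in> vclose D (gen D F)" unfolding vclose_def colon_def[of D "colon D _"]
          using qf_one[OF D] by blast
        then have "1 \<in> tclose D M" unfolding tclose_def using Ff Fne FM by blast
        then show ?thesis using Mt' M1 by simp
      next
        case False
        then obtain i where i: "i < n" "1 \<notin> tclose (Ds i) M" by blast
        obtain Q where "is_t_prime (Ds i) Q" "M \<subseteq> Q"
          using exists_t_prime[OF Dsr[OF i(1)] _ m0 i(2)] MD DDs[OF i(1)] by blast
        then show ?thesis using fin[OF i(1) _ Mp] by blast
      qed
    qed
  qed
  then show ?thesis unfolding is_PvMD_def D_def[symmetric] using D by blast
qed

end
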